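(* Let $G'$ be an inflation of the causal structure $G$. A set $\mathbf{V}\subseteq\mathcal{O}(G')$ of observed nodes of $G'$ is injectable if and only if every two-element subset of $\mathbf{V}$ is injectable. Equivalently, the injectable sets are exactly the cliques of the undirected graph on $\mathcal{O}(G')$ in which two nodes are adjacent iff the pair is injectable.
   Context: A causal structure $G$ is a finite DAG with nodes partitioned into observed $\mathcal{O}(G)$ and latent. $\mathrm{An}_G(\mathbf{X})$ denotes the set of ancestors of $\mathbf{X}$ including $\mathbf{X}$; the ancestral subgraph of $\mathbf{X}$ is the induced subgraph on $\mathrm{An}_G(\mathbf{X})$. Inflation: every node of $G'$ is a copy $X_i$ of a node $X$ of $G$, inheriting observed/latent status; $\mathbf{X}'\sim\mathbf{X}$ means $\mathbf{X}'$ contains exactly one copy of each node of $\mathbf{X}$ and nothing else, and for subgraphs $\sim$ also requires edges to correspond under dropping copy-indices. $G'$ is an inflation of $G$ if $\mathrm{Pa}_{G'}(X_i)\sim\mathrm{Pa}_G(X)$ for every node $X_i$ of $G'$. $\mathbf{V}'\subseteq\mathcal{O}(G')$ is injectable if there is $\mathbf{V}\subseteq\mathcal{O}(G)$ with $\mathbf{V}'\sim\mathbf{V}$ and the ancestral subgraph of $\mathbf{V}'$ in $G'$ $\sim$ the ancestral subgraph of $\mathbf{V}$ in $G$. *)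

theory Defs
  imports Main
begin

text \<open>A causal structure: node set, directed edge set (pairs (parent, child)),
  and the set of observed nodes (all other nodes are latent).\<close>
record 'a causal =
  nodes :: "'a set"
  edges :: "('a \<times> 'a) set"
  observed :: "'a set"

definition causal_structure :: "('a, 'b) causal_scheme \<Rightarrow> bool" where
  "causal_structure G \<longleftrightarrow> finite (nodes G) \<and> edges G \<subseteq> nodes G \<times> nodes G
     \<and> acyclic (edges G) \<and> observed G \<subseteq> nodes G"

definition parents :: "('a, 'b) causal_scheme \<Rightarrow> 'a \<Rightarrow> 'a set" where
  "parents G x = {y. (y, x) \<in> edges G}"

definition ancestors :: "('a, 'b) causal_scheme \<Rightarrow> 'a set \<Rightarrow> 'a set" where
  "ancestors G X = {y. \<exists>x\<in>X. (y, x) \<in> (edges G)\<^sup>*}"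

text \<open>Nodes of an inflation are copies (X, i) of nodes X of G; dropping the
  copy index is \<open>fst\<close>.  \<open>X' \<sim> X\<close> for node sets means \<open>fst\<close> is a bijection X' \<rightarrow> X.\<close>
definition node_corr :: "('a \<times> 'i) set \<Rightarrow> 'a set \<Rightarrow> bool" where
  "node_corr X' X \<longleftrightarrow> bij_betw fst X' X"

definition subgraph_corr ::
  "(('a \<times> 'i), 'c) causal_scheme \<Rightarrow> ('a \<times> 'i) set \<Rightarrow> ('a, 'b) causal_scheme \<Rightarrow> 'a set \<Rightarrow> bool" where
  "subgraph_corr G' A G B \<longleftrightarrow> node_corr A B \<and>
     (\<forall>a\<in>A. \<forall>b\<in>A. (a, b) \<in> edges G' \<longleftrightarrow> (fst a, fst b) \<in> edges G)"

definition inflation ::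
  "('a, 'b) causal_scheme \<Rightarrow> (('a \<times> 'i), 'c) causal_scheme \<Rightarrow> bool" where
  "inflation G G' \<longleftrightarrow> causal_structure G' \<and>
     (\<forall>v\<in>nodes G'. fst v \<in> nodes G \<and> (v \<in> observed G' \<longleftrightarrow> fst v \<in> observed G)
        \<and> node_corr (parents G' v) (parents G (fst v)))"

definition injectable ::
  "('a, 'b) causal_scheme \<Rightarrow> (('a \<times> 'i), 'c) causal_scheme \<Rightarrow> ('a \<times> 'i) set \<Rightarrow> bool" where
  "injectable G G' V' \<longleftrightarrow> V' \<subseteq> observed G' \<and>
     (\<exists>V. V \<subseteq> observed G \<and> node_corr V' V \<and>
          subgraph_corr G' (ancestors G' V') G (ancestors G V))"

end

theory Submission
  imports Defs
begin

lemma anc_nodes: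
  assumes "inflation G G'" "(y, x) \<in> (edges G')\<^sup>*" "x \<in> nodes G'"
  shows "y \<in> nodes G'"
  using assms(2,3)
proof (induction rule: converse_rtrancl_induct)
  case base then show ?case .
next
  case (step y z)
  then show ?case using assms(1) unfolding inflation_def causal_structure_def by blast
qed

lemma proj_path:
  assumes "inflation G G'" "(y, x) \<in> (edges G')\<^sup>*"
  shows "(fst y, fst x) \<in> (edges G)\<^sup>*"
  using assms(2)
proof (induction rule: rtrancl_induct)
  case base then show ?case by simp
next
  case (step z w)
  have w: "w \<in> nodes G'" using step.hyps(2) assms(1) unfolding inflation_def causal_structure_def by blast
  have "z \<in> parents G' w" using step.hyps(2) by (simp add: parents_def)
  then have "fst z \<in> parents G (fst w)" using assms(1) w unfolding inflation_def node_corr_def bij_betw_def by blast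
  then have "(fst z, fst w) \<in> edges G" by (simp add: parents_def)
  then show ?case using step.IH by (meson rtrancl.rtrancl_into_rtrancl)
qed

lemma lift_path:
  assumes "inflation G G'" "(u, w) \<in> (edges G)\<^sup>*"
  shows "\<forall>x\<in>nodes G'. fst x = w \<longrightarrow> (\<exists>y. fst y = u \<and> (y, x) \<in> (edges G')\<^sup>*)"
  using assms(2)
proof (induction rule: converse_rtrancl_induct)
  case base then show ?case by blast
next
  case (step u v)
  show ?case
  proof (intro ballI impI)
    fix x assume x: "x \<in> nodes G'" "fst x = w"
    then obtain y where y: "fst y = v" "(y, x) \<in> (edges G')\<^sup>*" using step.IH by blast
    have yn: "y \<in> nodes G'" using anc_nodes[OF assms(1) y(2) x(1)] .
    have "u \<in> parents G (fst y)" using step.hyps(1) y(1) by (simp add: parents_def)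
    then obtain z where "z \<in> parents G' y" "fst z = u"
    proof -
      have "node_corr (parents G' y) (parents G (fst y))"
        using assms(1) yn unfolding inflation_def by blast
      then have "fst ` parents G' y = parents G (fst y)"
        unfolding node_corr_def bij_betw_def by simp
      then have "u \<in> fst ` parents G' y" using \<open>u \<in> parents G (fst y)\<close> by simp
      then show ?thesis using that by (auto simp: image_iff)
    qed
    then have "(z, y) \<in> edges G'" "fst z = u" by (auto simp: parents_def)
    then show "\<exists>y. fst y = u \<and> (y, x) \<in> (edges G')\<^sup>*"
    proof -
      have "(z, x) \<in> (edges G')\<^sup>*" using \<open>(z, y) \<in> edges G'\<close> y(2) by (rule converse_rtrancl_into_rtrancl)
      then show ?thesis using \<open>fst z = u\<close> by blast
    qed
  qed
qed

lemma anc_image: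
  assumes "inflation G G'" "V' \<subseteq> nodes G'"
  shows "fst ` ancestors G' V' = ancestors G (fst ` V')"
proof
  show "fst ` ancestors G' V' \<subseteq> ancestors G (fst ` V')"
    using proj_path[OF assms(1)] unfolding ancestors_def by blast
next
  show "ancestors G (fst ` V') \<subseteq> fst ` ancestors G' V'"
  proof
    fix u assume "u \<in> ancestors G (fst ` V')"
    then obtain x where x: "x \<in> V'" "(u, fst x) \<in> (edges G)\<^sup>*" unfolding ancestors_def by blast
    then obtain y where "fst y = u" "(y, x) \<in> (edges G')\<^sup>*"
      using lift_path[OF assms(1) x(2)] assms(2) by blast
    then show "u \<in> fst ` ancestors G' V'" using x(1) unfolding ancestors_def by blast
  qed
qed

lemma inj_char:
  assumes inf: "inflation G G'" and V: "V' \<subseteq> observed G'"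
  shows "injectable G G' V' \<longleftrightarrow> inj_on fst (ancestors G' V')"
proof
  assume "injectable G G' V'"
  then show "inj_on fst (ancestors G' V')"
    unfolding injectable_def subgraph_corr_def node_corr_def bij_betw_def by blast
next
  assume inj: "inj_on fst (ancestors G' V')"
  have Vn: "V' \<subseteq> nodes G'" using V inf unfolding inflation_def causal_structure_def by blast
  have sub: "V' \<subseteq> ancestors G' V'" unfolding ancestors_def by blast
  have An: "ancestors G' V' \<subseteq> nodes G'"
    using anc_nodes[OF inf] Vn unfolding ancestors_def by blast
  have obs: "fst ` V' \<subseteq> observed G" using V Vn inf unfolding inflation_def by blast
  have nc: "node_corr V' (fst ` V')" unfolding node_corr_def
    using inj_on_subset[OF inj sub] by (simp add: bij_betw_def)
  have nc2: "node_corr (ancestors G' V') (ancestors G (fst ` V'))"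
    unfolding node_corr_def bij_betw_def using inj anc_image[OF inf Vn] by simp
  have ed: "\<forall>a\<in>ancestors G' V'. \<forall>b\<in>ancestors G' V'. (a, b) \<in> edges G' \<longleftrightarrow> (fst a, fst b) \<in> edges G"
  proof (intro ballI)
    fix a b assume a: "a \<in> ancestors G' V'" and b: "b \<in> ancestors G' V'"
    have bn: "b \<in> nodes G'" using b An by blast
    have pc: "node_corr (parents G' b) (parents G (fst b))" using inf bn unfolding inflation_def by blast
    show "(a, b) \<in> edges G' \<longleftrightarrow> (fst a, fst b) \<in> edges G"
    proof
      assume "(a, b) \<in> edges G'"
      then have "a \<in> parents G' b" by (simp add: parents_def)
      then show "(fst a, fst b) \<in> edges G" using pc unfolding node_corr_def bij_betw_def parents_def by blast
    next
      assume "(fst a, fst b) \<in> edges G"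
      then have "fst a \<in> parents G (fst b)" by (simp add: parents_def)
      moreover have "fst ` parents G' b = parents G (fst b)"
        using pc unfolding node_corr_def bij_betw_def by blast
      ultimately obtain c where c: "c \<in> parents G' b" "fst c = fst a" by force
      have ce: "(c, b) \<in> edges G'" using c(1) by (simp add: parents_def)
      have "c \<in> ancestors G' V'" using b ce converse_rtrancl_into_rtrancl unfolding ancestors_def
        by fastforce
      then have "c = a" using inj a c(2) inj_onD by metis
      then show "(a, b) \<in> edges G'" using ce by simp
    qed
  qed
  show "injectable G G' V'" unfolding injectable_def subgraph_corr_def
    using V obs nc nc2 ed by blast
qed

lemma anc_union: "ancestors G' V = (\<Union>v\<in>V. ancestors G' {v})"
  unfolding ancestors_def by blast

theorem mainTheorem4:
  fixes G :: "'a causal" and G' :: "('a \<times> nat) causal" and V :: "('a \<times> nat) set"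
  assumes "causal_structure G"
    and "inflation G G'"
    and "V \<subseteq> observed G'"
  shows "injectable G G' V \<longleftrightarrow> (\<forall>a\<in>V. \<forall>b\<in>V. injectable G G' {a, b})"
proof -
  have pair: "\<And>a b. a \<in> V \<Longrightarrow> b \<in> V \<Longrightarrow> injectable G G' {a, b} \<longleftrightarrow> inj_on fst (ancestors G' {a, b})"
  proof -
    fix a b assume "a \<in> V" "b \<in> V"
    then have "{a, b} \<subseteq> observed G'" using assms(3) by blast
    then show "injectable G G' {a, b} \<longleftrightarrow> inj_on fst (ancestors G' {a, b})"
      using inj_char[OF assms(2)] by blast
  qed
  have "inj_on fst (ancestors G' V) \<longleftrightarrow> (\<forall>a\<in>V. \<forall>b\<in>V. inj_on fst (ancestors G' {a, b}))"
  proof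
    assume i: "inj_on fst (ancestors G' V)"
    show "\<forall>a\<in>V. \<forall>b\<in>V. inj_on fst (ancestors G' {a, b})"
    proof (intro ballI)
      fix a b assume "a \<in> V" "b \<in> V"
      then have "ancestors G' {a, b} \<subseteq> ancestors G' V" unfolding ancestors_def by blast
      then show "inj_on fst (ancestors G' {a, b})" using i inj_on_subset by blast
    qed
  next
    assume h: "\<forall>a\<in>V. \<forall>b\<in>V. inj_on fst (ancestors G' {a, b})"
    show "inj_on fst (ancestors G' V)"
    proof (rule inj_onI)
      fix x y assume x: "x \<in> ancestors G' V" and y: "y \<in> ancestors G' V" and e: "fst x = fst y"
      obtain a where a: "a \<in> V" "x \<in> ancestors G' {a}" using x unfolding ancestors_def by blast
      obtain b where b: "b \<in> V" "y \<in> ancestors G' {b}" using y unfolding ancestors_def by blast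
      have "x \<in> ancestors G' {a, b}" "y \<in> ancestors G' {a, b}" using a(2) b(2) unfolding ancestors_def by auto
      moreover have "inj_on fst (ancestors G' {a, b})" using h a(1) b(1) by blast
      ultimately show "x = y" using e inj_onD by metis
    qed
  qed
  moreover have "(\<forall>a\<in>V. \<forall>b\<in>V. injectable G G' {a, b}) \<longleftrightarrow> (\<forall>a\<in>V. \<forall>b\<in>V. inj_on fst (ancestors G' {a, b}))"
    using pair by blast
  ultimately show ?thesis using inj_char[OF assms(2) assms(3)] by simp
qed

end
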